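(* Let $G$ be a non-discrete, totally disconnected, torsion-free locally compact abelian group. Then there exists a nonzero continuous homomorphism $\widehat{\mathbb{Q}/\mathbb{Z}}\to G$, i.e. $\mathrm{Hom}(\widehat{\mathbb{Q}/\mathbb{Z}},G)\neq 0$.
   Context: $\mathbb{Q}/\mathbb{Z}$ carries the discrete topology, and $\widehat{\mathbb{Q}/\mathbb{Z}}=\mathrm{Hom}(\mathbb{Q}/\mathbb{Z},\mathbb{R}/\mathbb{Z})$ is its Pontryagin dual (a compact group). $\mathrm{Hom}(A,B)$ is the group of continuous homomorphisms $A\to B$. *)

theory Defs
  imports "HOL-Analysis.Analysis" "HOL-Algebra.Group"
begin

definition topological_group :: "('a, 'b) monoid_scheme \<Rightarrow> 'a topology \<Rightarrow> bool" where
  "topological_group G T \<longleftrightarrow> group G \<and> topspace T = carrier G \<and>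
     continuous_map (prod_topology T T) T (\<lambda>(x, y). x \<otimes>\<^bsub>G\<^esub> y) \<and>
     continuous_map T T (\<lambda>x. inv\<^bsub>G\<^esub> x)"

definition LCA_group :: "('a, 'b) monoid_scheme \<Rightarrow> 'a topology \<Rightarrow> bool" where
  "LCA_group G T \<longleftrightarrow> topological_group G T \<and> comm_group G \<and>
     Hausdorff_space T \<and> locally_compact_space T"

definition totally_disconnected_space :: "'a topology \<Rightarrow> bool" where
  "totally_disconnected_space T \<longleftrightarrow>
     (\<forall>x \<in> topspace T. connected_component_of_set T x = {x})"

definition torsion_free :: "('a, 'b) monoid_scheme \<Rightarrow> bool" where
  "torsion_free G \<longleftrightarrow>
     (\<forall>x \<in> carrier G. \<forall>n::nat. n > 0 \<and> x [^]\<^bsub>G\<^esub> n = \<one>\<^bsub>G\<^esub> \<longrightarrow> x = \<one>\<^bsub>G\<^esub>)"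

text \<open>A continuous character of Q/Z
  (discrete) is the same as a homomorphism Q \<rightarrow> R/Z killing Z.  We realise R/Z as the
  unit circle in \<complex> (via t \<mapsto> exp(2 pi i t)), so a character is a function
  chi :: rat \<Rightarrow> complex with chi(a+b) = chi a * chi b, |chi a| = 1 and chi 1 = 1
  (hence chi vanishes on Z, i.e. factors through Q/Z).\<close>
definition QZ_dual_carrier :: "(rat \<Rightarrow> complex) set" where
  "QZ_dual_carrier = {c. (\<forall>a. norm (c a) = 1) \<and> (\<forall>a b. c (a + b) = c a * c b) \<and> c 1 = 1}"

definition QZ_dual :: "(rat \<Rightarrow> complex) monoid" where
  "QZ_dual = \<lparr>carrier = QZ_dual_carrier, mult = (\<lambda>c d a. c a * d a), one = (\<lambda>a. 1)\<rparr>"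

text \<open>Compact-open topology on the dual; since Q/Z is discrete this is the topology
  of pointwise convergence, i.e. the subspace topology of the product topology.\<close>
definition QZ_dual_topology :: "(rat \<Rightarrow> complex) topology" where
  "QZ_dual_topology = subtopology (product_topology (\<lambda>_. euclidean) UNIV) QZ_dual_carrier"

end

theory Submission
  imports Defs
begin


definition zeta :: "nat \<Rightarrow> nat \<Rightarrow> complex" where
  "zeta N j = exp(2 * of_real pi * \<i> * of_nat j / of_nat N)"

definition ee :: "nat \<Rightarrow> (rat \<Rightarrow> complex) \<Rightarrow> nat" where
  "ee n c = (SOME j. j < fact n \<and> c (1 / of_nat (fact n)) = zeta (fact n) j)"

lemma char_0: "c \<in> QZ_dual_carrier \<Longrightarrow> c 0 = 1"
proof -
  assume c: "c \<in> QZ_dual_carrier"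
  have m: "c (0 + 0) = c 0 * c 0" and n: "norm (c 0) = 1"
    using c unfolding QZ_dual_carrier_def by blast+
  have nz: "c 0 \<noteq> 0" using n by auto
  have "c 0 * c 0 = c 0 * 1" using m by simp
  then show ?thesis using mult_left_cancel[OF nz] by blast
qed

lemma char_nat_mult: "c \<in> QZ_dual_carrier \<Longrightarrow> c (of_nat k * q) = c q ^ k"
proof (induction k)
  case 0 then show ?case by (simp add: char_0)
next
  case (Suc k)
  have "c (of_nat (Suc k) * q) = c (q + of_nat k * q)" by (simp add: algebra_simps)
  also have "\<dots> = c q * c (of_nat k * q)" using Suc.prems unfolding QZ_dual_carrier_def by blast
  finally show ?case using Suc by simp
qed

lemma char_root: "c \<in> QZ_dual_carrier \<Longrightarrow> N > 0 \<Longrightarrow> c (1 / of_nat N) ^ N = 1"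
proof -
  assume c: "c \<in> QZ_dual_carrier" and N: "N > 0"
  have "c (of_nat N * (1 / of_nat N)) = c (1 / of_nat N) ^ N" by (rule char_nat_mult[OF c])
  moreover have "of_nat N * (1 / of_nat N) = (1::rat)" using N by simp
  moreover have "c 1 = 1" using c unfolding QZ_dual_carrier_def by blast
  ultimately show ?thesis by simp
qed

lemma root_is_zeta: "z ^ N = 1 \<Longrightarrow> N > 0 \<Longrightarrow> \<exists>j<N. z = zeta N j"
  using complex_roots_unity[of N] unfolding zeta_def by auto

lemma zeta_inj: "N > 0 \<Longrightarrow> zeta N j = zeta N k \<longleftrightarrow> j mod N = k mod N"
  unfolding zeta_def by (rule complex_root_unity_eq) simp

lemma ee_spec: "c \<in> QZ_dual_carrier \<Longrightarrow> ee n c < fact n \<and> c (1 / of_nat (fact n)) = zeta (fact n) (ee n c)"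
proof -
  assume c: "c \<in> QZ_dual_carrier"
  have p: "0 < (fact n::nat)" by simp
  have "\<exists>j < fact n. c (1 / of_nat (fact n)) = zeta (fact n) j"
    by (rule root_is_zeta[OF char_root[OF c p] p])
  then show ?thesis unfolding ee_def by (rule someI_ex)
qed

lemma ee_unique: "c \<in> QZ_dual_carrier \<Longrightarrow> c (1 / of_nat (fact n)) = zeta (fact n) j \<Longrightarrow> ee n c = j mod fact n"
proof -
  assume c: "c \<in> QZ_dual_carrier" and j: "c (1 / of_nat (fact n)) = zeta (fact n) j"
  have "zeta (fact n) (ee n c) = zeta (fact n) j" using ee_spec[OF c] j by simp
  then have "ee n c mod fact n = j mod fact n" using zeta_inj[of "fact n"] by simp
  then show ?thesis using ee_spec[OF c, of n] by simp
qed

lemma zeta_pow: "zeta N j ^ k = zeta N (j * k)"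
  unfolding zeta_def by (simp add: exp_of_nat_mult[symmetric] algebra_simps)

lemma zeta_mult: "zeta N j * zeta N k = zeta N (j + k)"
  unfolding zeta_def by (simp add: exp_add[symmetric] add_divide_distrib algebra_simps)

lemma zeta_scale: "N > 0 \<Longrightarrow> k > 0 \<Longrightarrow> zeta (N * k) (j * k) = zeta N j"
proof -
  assume "N > 0" "k > 0"
  then have "2 * of_real pi * \<i> * of_nat (j * k) / of_nat (N * k) = 2 * of_real pi * \<i> * (of_nat j :: complex) / of_nat N"
    by (simp add: field_simps)
  then show ?thesis unfolding zeta_def by simp
qed

lemma ee_compat:
  assumes c: "c \<in> QZ_dual_carrier" and nm: "n \<le> m"
  shows "ee m c mod fact n = ee n c"
proof -
  obtain k where k: "fact m = fact n * (k::nat)" using fact_dvd[OF nm] by (metis dvd_def)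
  have kp: "0 < k" using k by (metis fact_nonzero mult_0_right neq0_conv)
  have "(1::rat) / of_nat (fact n) = of_nat k * (1 / of_nat (fact m))"
    using k kp by (simp add: field_simps)
  then have "c (1 / of_nat (fact n)) = c (of_nat k * (1 / of_nat (fact m)))" by (rule arg_cong)
  also have "\<dots> = c (1 / of_nat (fact m)) ^ k" by (rule char_nat_mult[OF c])
  also have "\<dots> = zeta (fact m) (ee m c) ^ k" using ee_spec[OF c, of m] by (simp only:)
  also have "\<dots> = zeta (fact m) (ee m c * k)" by (rule zeta_pow)
  also have "\<dots> = zeta (fact n) (ee m c)" using k zeta_scale[of "fact n" k "ee m c"] kp by simp
  finally have "ee n c = ee m c mod fact n" by (rule ee_unique[OF c])
  then show ?thesis by simp
qed

lemma QZ_mult_closed: "c \<in> QZ_dual_carrier \<Longrightarrow> d \<in> QZ_dual_carrier \<Longrightarrow> (\<lambda>a. c a * d a) \<in> QZ_dual_carrier"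
  unfolding QZ_dual_carrier_def by (auto simp: norm_mult)

lemma ee_mult:
  assumes c: "c \<in> QZ_dual_carrier" and d: "d \<in> QZ_dual_carrier"
  shows "ee n (\<lambda>a. c a * d a) = (ee n c + ee n d) mod fact n"
  using ee_unique[OF QZ_mult_closed[OF c d]] ee_spec[OF c] ee_spec[OF d] zeta_mult by simp

definition chi0 :: "rat \<Rightarrow> complex" where
  "chi0 q = exp (2 * of_real pi * \<i> * of_real (of_rat q))"

lemma chi0_carrier: "chi0 \<in> QZ_dual_carrier"
  unfolding QZ_dual_carrier_def chi0_def
  by (auto simp: of_rat_add distrib_left exp_add norm_exp_eq_Re)

lemma chi0_root: "chi0 (1 / of_nat N) = zeta N 1"
  unfolding chi0_def zeta_def by (simp add: of_rat_divide)

lemma ee_chi0: "ee n chi0 = 1 mod fact n"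
proof -
  have "chi0 (1 / of_nat (fact n)) = zeta (fact n) 1"
    by (rule chi0_root)
  then show ?thesis using ee_unique[OF chi0_carrier] by simp
qed

lemma topspace_QZ: "topspace QZ_dual_topology = QZ_dual_carrier"
  unfolding QZ_dual_topology_def by simp

lemma open_level_set:
  assumes c: "c \<in> QZ_dual_carrier"
  shows "openin QZ_dual_topology {d \<in> QZ_dual_carrier. d (1 / of_nat (fact n)) = c (1 / of_nat (fact n))}"
proof -
  let ?q = "1 / of_nat (fact n) :: rat"
  define R where "R = {z::complex. z ^ fact n = 1}"
  have "R = {exp(2 * of_real pi * \<i> * of_nat j / of_nat (fact n)) | j::nat. j < fact n}"
    unfolding R_def by (rule complex_roots_unity) simp
  then have fR: "finite R" by simp
  have "closed (R - {c ?q})" using fR by (simp add: finite_imp_closed)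
  then have op: "open (- (R - {c ?q}))" by (rule open_Compl)
  have "openin (product_topology (\<lambda>_. euclidean) UNIV) {x \<in> topspace (product_topology (\<lambda>_. euclidean) UNIV). x ?q \<in> - (R - {c ?q})}"
    by (rule openin_continuous_map_preimage[OF continuous_map_product_projection]) (use op in auto)
  then have "openin (product_topology (\<lambda>_::rat. (euclidean::complex topology)) UNIV) {x. x ?q \<in> - (R - {c ?q})}"
    by simp
  then have "openin QZ_dual_topology (QZ_dual_carrier \<inter> {x. x ?q \<in> - (R - {c ?q})})"
    unfolding QZ_dual_topology_def by (rule openin_subtopology_Int2)
  moreover have "QZ_dual_carrier \<inter> {x. x ?q \<in> - (R - {c ?q})} = {d \<in> QZ_dual_carrier. d ?q = c ?q}"
  proof -
    have "d ?q \<in> R" if "d \<in> QZ_dual_carrier" for d using char_root[OF that, of "fact n"] unfolding R_def by simp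
    then show ?thesis by auto
  qed
  ultimately show ?thesis by simp
qed


definition limf :: "('a, 'b) monoid_scheme \<Rightarrow> 'a topology \<Rightarrow> 'a \<Rightarrow> (rat \<Rightarrow> complex) \<Rightarrow> 'a" where
  "limf G T x c = (THE y. y \<in> carrier G \<and> (\<forall>H. subgroup H G \<and> openin T H \<longrightarrow>
      (\<exists>N. \<forall>n\<ge>N. inv\<^bsub>G\<^esub> y \<otimes>\<^bsub>G\<^esub> x [^]\<^bsub>G\<^esub> ee n c \<in> H)))"

locale tdlca = comm_group G for G (structure) +
  fixes T :: "'a topology"
  assumes ts: "topspace T = carrier G"
    and mcont: "continuous_map (prod_topology T T) T (\<lambda>(x, y). x \<otimes> y)"
    and icont: "continuous_map T T (\<lambda>x. inv x)"
    and haus: "Hausdorff_space T"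
    and lc: "locally_compact_space T"
    and td: "totally_disconnected_space T"
    and nd: "T \<noteq> discrete_topology (carrier G)"
begin

lemma lmult_cont: "a \<in> carrier G \<Longrightarrow> continuous_map T T (\<lambda>y. a \<otimes> y)"
proof -
  assume a: "a \<in> carrier G"
  have "continuous_map T (prod_topology T T) (\<lambda>y. (a, y))"
    using a ts by (simp add: continuous_map_pairwise o_def)
  from continuous_map_compose[OF this mcont] show ?thesis by (simp add: o_def)
qed

lemma trans_open:
  assumes "a \<in> carrier G" "openin T U"
  shows "openin T {y \<in> carrier G. a \<otimes> y \<in> U}"
  using openin_continuous_map_preimage[OF lmult_cont[OF assms(1)] assms(2)] ts by simp

lemma inv_open:
  assumes "openin T U"
  shows "openin T {y \<in> carrier G. inv y \<in> U}"
  using openin_continuous_map_preimage[OF icont assms] ts by simp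


lemma inv_mult_eq_one: "y \<in> carrier G \<Longrightarrow> z \<in> carrier G \<Longrightarrow> (inv y \<otimes> z = \<one>) = (z = y)"
  by (metis inv_closed inv_equality inv_inv r_inv)

lemma one_not_open: "\<not> openin T {\<one>}"
proof
  assume o: "openin T {\<one>}"
  have "openin T {y}" if "y \<in> carrier G" for y
  proof -
    have "{z \<in> carrier G. inv y \<otimes> z \<in> {\<one>}} = {y}"
      using that inv_mult_eq_one[OF that] by blast
    with trans_open[of "inv y" "{\<one>}"] o that show ?thesis by simp
  qed
  then have "discrete_topology (carrier G) = T"
    by (simp add: discrete_topology_unique ts)
  with nd show False by simp
qed


lemma compact_open_nbhd:
  assumes W: "openin T W" "\<one> \<in> W"
  shows "\<exists>V. openin T V \<and> compactin T V \<and> \<one> \<in> V \<and> V \<subseteq> W"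
proof -
  obtain U L where UL: "openin T U" "compactin T L" "\<one> \<in> U" "U \<subseteq> L"
    using lc ts unfolding locally_compact_space_def by (metis one_closed)
  have cc: "{\<one>} \<in> connected_components_of T"
    using td ts unfolding connected_components_of_def totally_disconnected_space_def
    by (metis imageI one_closed)
  have "openin T (W \<inter> U)" using W UL by blast
  then obtain U' V' where *: "openin T U'" "openin T V'" "disjnt U' V'" "U' \<union> V' = topspace T"
      "{\<one>} \<subseteq> U'" "U' \<subseteq> W \<inter> U"
    using wilder_locally_compact_component_thm[OF lc haus cc compactin_sing[THEN iffD2] _ ] W UL ts
    by (metis Int_iff empty_subsetI insert_subset one_closed)
  have "topspace T - U' = V'" using * openin_subset[OF *(2)] by (auto simp: disjnt_def)
  then have "closedin T U'" using * by (simp add: closedin_def openin_subset)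
  then have "compactin T U'" using closed_compactin[OF UL(2)] * UL by blast
  with * show ?thesis by blast
qed

lemma foldr_closed: "set ws \<subseteq> carrier G \<Longrightarrow> foldr (\<otimes>) ws \<one> \<in> carrier G"
  by (induction ws) auto

lemma foldr_append: "set xs \<subseteq> carrier G \<Longrightarrow> set ys \<subseteq> carrier G \<Longrightarrow>
   foldr (\<otimes>) (xs @ ys) \<one> = foldr (\<otimes>) xs \<one> \<otimes> foldr (\<otimes>) ys \<one>"
  by (induction xs) (auto simp: m_assoc foldr_closed)

lemma foldr_inv: "set ws \<subseteq> carrier G \<Longrightarrow> foldr (\<otimes>) (map (\<lambda>x. inv x) ws) \<one> = inv (foldr (\<otimes>) ws \<one>)"
  by (induction ws) (auto simp: inv_mult foldr_closed)

lemma open_subgroup: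
  assumes U: "openin T U" "\<one> \<in> U"
  shows "\<exists>H. subgroup H G \<and> openin T H \<and> compactin T H \<and> H \<subseteq> U"
proof -
  obtain V where V: "openin T V" "compactin T V" "\<one> \<in> V" "V \<subseteq> U"
    using compact_open_nbhd[OF U] by blast
  have Vc: "V \<subseteq> carrier G" using openin_subset[OF V(1)] ts by simp
  define Wm where "Wm = {p \<in> topspace (prod_topology T T). (\<lambda>(x, y). x \<otimes> y) p \<in> V}"
  have Wm: "openin (prod_topology T T) Wm"
    unfolding Wm_def by (rule openin_continuous_map_preimage[OF mcont V(1)])
  have "V \<times> {\<one>} \<subseteq> Wm" using Vc ts unfolding Wm_def by auto
  then obtain A B where AB: "openin T A" "openin T B" "V \<subseteq> A" "\<one> \<in> B" "A \<times> B \<subseteq> Wm"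
    using tube_lemma_left[OF Wm V(2), of \<one>] ts by auto
  have VB: "v \<otimes> b \<in> V" if "v \<in> V" "b \<in> B" for v b
  proof -
    have "(v, b) \<in> Wm" using AB(3,5) that by blast
    then show ?thesis unfolding Wm_def by simp
  qed
  define W where "W = (B \<inter> V) \<inter> {w \<in> carrier G. inv w \<in> B \<inter> V}"
  have Wo: "openin T W" unfolding W_def using AB V inv_open by blast
  have Wc: "W \<subseteq> carrier G" unfolding W_def by auto
  have W1: "\<one> \<in> W" unfolding W_def using AB V by auto
  have Winv: "w \<in> W \<Longrightarrow> inv w \<in> W" for w unfolding W_def by auto
  have WV: "w \<in> W \<Longrightarrow> v \<in> V \<Longrightarrow> w \<otimes> v \<in> V" for w v
    using VB[of v w] Vc Wc unfolding W_def by (auto simp: m_comm)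
  define H where "H = {g. \<exists>ws. set ws \<subseteq> W \<and> g = foldr (\<otimes>) ws \<one>}"
  have HV: "set ws \<subseteq> W \<Longrightarrow> foldr (\<otimes>) ws \<one> \<in> V" for ws
    by (induction ws) (auto simp: V(3) WV)
  have HsubV: "H \<subseteq> V" unfolding H_def using HV by blast
  have Hc: "H \<subseteq> carrier G" using HsubV Vc by blast
  have H1: "\<one> \<in> H" unfolding H_def by (rule CollectI, rule exI[of _ "[]"]) simp
  have Hmult: "a \<otimes> b \<in> H" if ab: "a \<in> H" "b \<in> H" for a b
  proof -
    obtain xs ys where "set xs \<subseteq> W" "a = foldr (\<otimes>) xs \<one>" "set ys \<subseteq> W" "b = foldr (\<otimes>) ys \<one>"
      using ab unfolding H_def by blast
    then show ?thesis unfolding H_def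
      by (intro CollectI exI[of _ "xs @ ys"]) (use Wc foldr_append in auto)
  qed
  have Hinv: "inv a \<in> H" if aH: "a \<in> H" for a
  proof -
    obtain xs where "set xs \<subseteq> W" "a = foldr (\<otimes>) xs \<one>"
      using aH unfolding H_def by blast
    then show ?thesis unfolding H_def
      by (intro CollectI exI[of _ "map (\<lambda>x. inv x) xs"]) (use Wc foldr_inv Winv in auto)
  qed
  have sg: "subgroup H G"
    by (rule subgroupI) (use Hc H1 Hmult Hinv in auto)
  have WH: "W \<subseteq> H" unfolding H_def
  proof
    fix w assume "w \<in> W" then show "w \<in> {g. \<exists>ws. set ws \<subseteq> W \<and> g = foldr (\<otimes>) ws \<one>}"
      using Wc by (intro CollectI exI[of _ "[w]"]) auto
  qed
  have Ho: "openin T H"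
  proof (subst openin_subopen, intro ballI)
    fix h assume h: "h \<in> H"
    have hc: "h \<in> carrier G" using h Hc by blast
    let ?S = "{y \<in> carrier G. inv h \<otimes> y \<in> W}"
    have "openin T ?S" using trans_open[OF inv_closed[OF hc] Wo] .
    moreover have "h \<in> ?S" using hc W1 by simp
    moreover have "?S \<subseteq> H"
    proof
      fix y assume y: "y \<in> ?S"
      then have "h \<otimes> (inv h \<otimes> y) \<in> H" using Hmult h WH by blast
      then show "y \<in> H" using y hc by (simp add: m_assoc[symmetric])
    qed
    ultimately show "\<exists>S. openin T S \<and> h \<in> S \<and> S \<subseteq> H" by blast
  qed
  have "openin T (topspace T - H)"
  proof (subst openin_subopen, intro ballI)
    fix g assume g: "g \<in> topspace T - H"
    have gc: "g \<in> carrier G" using g ts by blast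
    let ?S = "{y \<in> carrier G. inv g \<otimes> y \<in> H}"
    have "openin T ?S" using trans_open[OF inv_closed[OF gc] Ho] .
    moreover have "g \<in> ?S" using gc H1 by simp
    moreover have "?S \<subseteq> topspace T - H"
    proof
      fix y assume y: "y \<in> ?S"
      show "y \<in> topspace T - H"
      proof (rule ccontr)
        assume "y \<notin> topspace T - H"
        then have yH: "y \<in> H" using y ts by blast
        have "y \<otimes> inv (inv g \<otimes> y) \<in> H" using Hmult Hinv yH y by blast
        also have "y \<otimes> inv (inv g \<otimes> y) = g" using gc y by (simp add: inv_mult m_ac)
        finally show False using g by blast
      qed
    qed
    ultimately show "\<exists>S. openin T S \<and> g \<in> S \<and> S \<subseteq> topspace T - H" by blast
  qed
  then have "closedin T H" using Hc ts by (simp add: closedin_def)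
  then have "compactin T H" using closed_compactin[OF V(2) HsubV] by blast
  with sg Ho HsubV V(4) show ?thesis by blast
qed


lemma compact_cover:
  assumes "compactin T K" "\<And>k. k \<in> K \<Longrightarrow> openin T (C k) \<and> k \<in> C k"
  shows "\<exists>F. F \<subseteq> K \<and> finite F \<and> K \<subseteq> \<Union> (C ` F)"
proof -
  have "(\<forall>U \<in> C ` K. openin T U) \<and> K \<subseteq> \<Union> (C ` K)" using assms(2) by blast
  then obtain \<F> where "finite \<F>" "\<F> \<subseteq> C ` K" "K \<subseteq> \<Union>\<F>"
    using assms(1) unfolding compactin_def by meson
  then obtain F where "F \<subseteq> K" "finite F" "\<F> = C ` F"
    by (metis finite_subset_image)
  then show ?thesis using \<open>K \<subseteq> \<Union>\<F>\<close> by blast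
qed

lemma subgroup_pow_closed: "subgroup H G \<Longrightarrow> a \<in> H \<Longrightarrow> a [^] (n::nat) \<in> H"
  by (induction n) (auto simp: subgroup.one_closed subgroup.m_closed)

lemma pow_in_open_subgroup:
  assumes K: "compactin T K" "subgroup K G" and x: "x \<in> K"
    and H: "subgroup H G" "openin T H"
  shows "\<exists>N. \<forall>n\<ge>N. \<forall>q::nat. x [^] (fact n * q) \<in> H"
proof -
  have Kc: "K \<subseteq> carrier G" using K(2) subgroup.subset by blast
  have xc: "x \<in> carrier G" using x Kc by blast
  define C where "C k = {y \<in> carrier G. inv k \<otimes> y \<in> H}" for k
  have "openin T (C k) \<and> k \<in> C k" if "k \<in> K" for k
    unfolding C_def using trans_open[OF inv_closed H(2)] that Kc subgroup.one_closed[OF H(1)] by auto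
  then obtain F where F: "F \<subseteq> K" "finite F" "K \<subseteq> \<Union> (C ` F)"
    using compact_cover[OF K(1)] by blast
  define M where "M = card F"
  define g where "g j = (SOME k. k \<in> F \<and> x [^] (j::nat) \<in> C k)" for j
  have g: "g j \<in> F \<and> x [^] j \<in> C (g j)" for j
  proof -
    have "x [^] j \<in> K" using subgroup_pow_closed[OF K(2) x] .
    then have "\<exists>k. k \<in> F \<and> x [^] j \<in> C k" using F(3) by blast
    then show ?thesis unfolding g_def by (rule someI_ex)
  qed
  have "\<not> inj_on g {..M}"
  proof
    assume "inj_on g {..M}"
    then have "card (g ` {..M}) = Suc M" by (simp add: card_image)
    moreover have "card (g ` {..M}) \<le> M" unfolding M_def using g F(2) by (intro card_mono) auto
    ultimately show False by simp
  qed
  then obtain i j where ij: "i \<le> M" "j \<le> M" "i < j" "g i = g j"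
    unfolding inj_on_def by (metis atMost_iff linorder_neqE_nat)
  define d where "d = j - i"
  have d: "0 < d" "d \<le> M" using ij unfolding d_def by auto
  define k where "k = g i"
  have kc: "k \<in> carrier G" using g F Kc unfolding k_def by blast
  have hi: "inv k \<otimes> x [^] i \<in> H" using g[of i] unfolding C_def k_def by auto
  have hj: "inv k \<otimes> x [^] j \<in> H" using g[of j] ij(4) unfolding C_def k_def by auto
  have xj: "x [^] j = x [^] i \<otimes> x [^] d" unfolding d_def using ij xc by (simp add: nat_pow_mult)
  have "inv (inv k \<otimes> x [^] i) \<otimes> (inv k \<otimes> x [^] j) = x [^] d"
    using kc xc by (simp add: xj inv_mult m_ac, simp add: m_assoc[symmetric])
  then have xd: "x [^] d \<in> H" using hi hj H(1) by (metis subgroup.m_closed subgroup.m_inv_closed)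
  have "x [^] (fact n * q) \<in> H" if "n \<ge> M" for n q :: nat
  proof -
    have "d dvd (fact n :: nat)" using d that by (intro dvd_fact) auto
    then obtain r where "fact n * q = d * (r * q)" by (metis dvd_def mult.assoc)
    then have "x [^] (fact n * q) = (x [^] d) [^] (r * q)" using xc by (simp only: nat_pow_pow)
    then show ?thesis using subgroup_pow_closed[OF H(1) xd] by simp
  qed
  then show ?thesis by blast
qed


lemma c1: "a \<in> carrier G \<Longrightarrow> c \<in> carrier G \<Longrightarrow> a \<otimes> (inv a \<otimes> c) = c"
  by (simp add: m_assoc[symmetric])
lemma c2: "a \<in> carrier G \<Longrightarrow> b \<in> carrier G \<Longrightarrow> c \<in> carrier G \<Longrightarrow> a \<otimes> (b \<otimes> (inv a \<otimes> c)) = b \<otimes> c"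
  by (metis c1 inv_closed m_closed m_lcomm)
lemma c3: "a \<in> carrier G \<Longrightarrow> b \<in> carrier G \<Longrightarrow> c \<in> carrier G \<Longrightarrow> d \<in> carrier G \<Longrightarrow> a \<otimes> (b \<otimes> (d \<otimes> (inv a \<otimes> c))) = b \<otimes> (d \<otimes> c)"
  by (metis c2 inv_closed m_closed m_lcomm)
lemma c4: "a \<in> carrier G \<Longrightarrow> b \<in> carrier G \<Longrightarrow> a \<otimes> (b \<otimes> inv a) = b"
  by (metis inv_closed m_lcomm r_inv r_one)
lemma c5: "a \<in> carrier G \<Longrightarrow> b \<in> carrier G \<Longrightarrow> d \<in> carrier G \<Longrightarrow> a \<otimes> (b \<otimes> (d \<otimes> inv a)) = b \<otimes> d"
  by (metis c4 inv_closed m_closed m_lcomm)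

lemma id1: "a \<in> carrier G \<Longrightarrow> b \<in> carrier G \<Longrightarrow> c \<in> carrier G \<Longrightarrow> (inv a \<otimes> c) \<otimes> inv (inv b \<otimes> c) = inv a \<otimes> b"
  by (simp add: inv_mult m_ac c1 c2 c3 c4 c5)

lemma id2: "y \<in> carrier G \<Longrightarrow> q \<in> carrier G \<Longrightarrow> p \<in> carrier G \<Longrightarrow> r \<in> carrier G \<Longrightarrow>
   ((inv y \<otimes> q) \<otimes> inv (inv p \<otimes> q)) \<otimes> (inv p \<otimes> r) = inv y \<otimes> r"
  by (simp add: inv_mult m_ac c1 c2 c3 c4 c5)

lemma id3: "yc \<in> carrier G \<Longrightarrow> yd \<in> carrier G \<Longrightarrow> A \<in> carrier G \<Longrightarrow> B \<in> carrier G \<Longrightarrow> S \<in> carrier G \<Longrightarrow> X \<in> carrier G \<Longrightarrow>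
   A \<otimes> B = S \<otimes> X \<Longrightarrow> inv (yc \<otimes> yd) \<otimes> S = ((inv yc \<otimes> A) \<otimes> (inv yd \<otimes> B)) \<otimes> inv X"
proof -
  assume c: "yc \<in> carrier G" "yd \<in> carrier G" "A \<in> carrier G" "B \<in> carrier G" "S \<in> carrier G" "X \<in> carrier G"
    and e: "A \<otimes> B = S \<otimes> X"
  have "((inv yc \<otimes> A) \<otimes> (inv yd \<otimes> B)) \<otimes> inv X = inv (yc \<otimes> yd) \<otimes> ((A \<otimes> B) \<otimes> inv X)"
    using c by (simp add: inv_mult m_ac)
  also have "\<dots> = inv (yc \<otimes> yd) \<otimes> S" using c by (simp add: e m_assoc)
  finally show ?thesis by simp
qed

lemma sep:
  assumes z: "z \<in> carrier G" and H: "\<And>H. subgroup H G \<Longrightarrow> openin T H \<Longrightarrow> z \<in> H"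
  shows "z = \<one>"
proof (rule ccontr)
  assume "z \<noteq> \<one>"
  then obtain U V where "openin T U" "openin T V" "\<one> \<in> U" "z \<in> V" "disjnt U V"
    using haus z ts unfolding Hausdorff_space_def by (metis one_closed)
  moreover obtain H0 where "subgroup H0 G" "openin T H0" "H0 \<subseteq> U"
    using open_subgroup[of U] calculation by blast
  ultimately show False using H[of H0] by (auto simp: disjnt_def)
qed

context
  fixes K x
  assumes K: "compactin T K" "subgroup K G" and x: "x \<in> K"
begin

lemma xc: "x \<in> carrier G" using x K(2) subgroup.subset by blast

lemma stab:
  assumes H: "subgroup H G" "openin T H"
  shows "\<exists>N. (\<forall>n\<ge>N. \<forall>q::nat. x [^] (fact n * q) \<in> H) \<and>
     (\<forall>n\<ge>N. \<forall>m\<ge>n. \<forall>c\<in>QZ_dual_carrier. inv (x [^] ee n c) \<otimes> x [^] ee m c \<in> H)"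
proof -
  obtain N where N: "\<forall>n\<ge>N. \<forall>q::nat. x [^] (fact n * q) \<in> H"
    using pow_in_open_subgroup[OF K x H] by blast
  have "inv (x [^] ee n c) \<otimes> x [^] ee m c \<in> H" if "n \<ge> N" "m \<ge> n" "c \<in> QZ_dual_carrier" for n m c
  proof -
    have "ee m c = ee m c mod fact n + fact n * (ee m c div fact n)" by simp
    then have e: "ee m c = ee n c + fact n * (ee m c div fact n)" using ee_compat[OF that(3,2)] by simp
    have "x [^] ee m c = x [^] ee n c \<otimes> x [^] (fact n * (ee m c div fact n))"
      by (subst e) (simp add: nat_pow_mult xc)
    then have "inv (x [^] ee n c) \<otimes> x [^] ee m c = x [^] (fact n * (ee m c div fact n))"
      using xc by (simp add: m_assoc[symmetric])
    then show ?thesis using N that by simp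
  qed
  with N show ?thesis by blast
qed

abbreviation P where "P c y \<equiv> (\<forall>H. subgroup H G \<and> openin T H \<longrightarrow>
      (\<exists>N. \<forall>n\<ge>N. inv y \<otimes> x [^] ee n c \<in> H))"

lemma P_unique:
  assumes "y1 \<in> carrier G" "y2 \<in> carrier G" "P c y1" "P c y2"
  shows "y1 = y2"
proof -
  have "inv y1 \<otimes> y2 \<in> H" if H: "subgroup H G" "openin T H" for H
  proof -
    obtain N1 N2 where N1: "\<forall>n\<ge>N1. inv y1 \<otimes> x [^] ee n c \<in> H" and N2: "\<forall>n\<ge>N2. inv y2 \<otimes> x [^] ee n c \<in> H"
      using assms H by meson
    let ?n = "max N1 N2"
    have "(inv y1 \<otimes> x [^] ee ?n c) \<otimes> inv (inv y2 \<otimes> x [^] ee ?n c) \<in> H"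
      using N1 N2 H(1) by (meson max.cobounded1 max.cobounded2 subgroup.m_closed subgroup.m_inv_closed)
    then show ?thesis using id1 assms xc by simp
  qed
  then have "inv y1 \<otimes> y2 = \<one>" using sep assms by simp
  then show ?thesis using inv_mult_eq_one assms by simp
qed

lemma P_exists:
  assumes c: "c \<in> QZ_dual_carrier"
  shows "\<exists>y\<in>K. P c y"
proof (rule ccontr)
  assume no: "\<not> (\<exists>y\<in>K. P c y)"
  have Kc: "K \<subseteq> carrier G" using K(2) subgroup.subset by blast
  define Hy where "Hy y = (SOME H. subgroup H G \<and> openin T H \<and> (\<forall>N. \<exists>n\<ge>N. inv y \<otimes> x [^] ee n c \<notin> H))" for y
  have Hy: "subgroup (Hy y) G \<and> openin T (Hy y) \<and> (\<forall>N. \<exists>n\<ge>N. inv y \<otimes> x [^] ee n c \<notin> Hy y)" if "y \<in> K" for y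
  proof -
    have "\<exists>H. subgroup H G \<and> openin T H \<and> (\<forall>N. \<exists>n\<ge>N. inv y \<otimes> x [^] ee n c \<notin> H)"
      using no that by blast
    then show ?thesis unfolding Hy_def by (rule someI_ex)
  qed
  define C where "C y = {z \<in> carrier G. inv y \<otimes> z \<in> Hy y}" for y
  have "openin T (C y) \<and> y \<in> C y" if "y \<in> K" for y
    unfolding C_def using trans_open[OF inv_closed, of y "Hy y"] Hy[OF that] that Kc
      subgroup.one_closed[of "Hy y" G] by auto
  then obtain F where F: "F \<subseteq> K" "finite F" "K \<subseteq> \<Union> (C ` F)"
    using compact_cover[OF K(1)] by blast
  define Ny where "Ny y = (SOME N. (\<forall>n\<ge>N. \<forall>q::nat. x [^] (fact n * q) \<in> Hy y) \<and>
     (\<forall>n\<ge>N. \<forall>m\<ge>n. \<forall>c\<in>QZ_dual_carrier. inv (x [^] ee n c) \<otimes> x [^] ee m c \<in> Hy y))" for y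
  have Ny: "\<forall>n\<ge>Ny y. \<forall>m\<ge>n. \<forall>c\<in>QZ_dual_carrier. inv (x [^] ee n c) \<otimes> x [^] ee m c \<in> Hy y" if "y \<in> K" for y
  proof -
    have "\<exists>N. (\<forall>n\<ge>N. \<forall>q::nat. x [^] (fact n * q) \<in> Hy y) \<and>
     (\<forall>n\<ge>N. \<forall>m\<ge>n. \<forall>c\<in>QZ_dual_carrier. inv (x [^] ee n c) \<otimes> x [^] ee m c \<in> Hy y)"
      using stab Hy[OF that] by blast
    from someI_ex[OF this] show ?thesis unfolding Ny_def by blast
  qed
  define N where "N = Max (insert 0 (Ny ` F))"
  have NN: "Ny y \<le> N" if "y \<in> F" for y unfolding N_def using F(2) that by simp
  have "x [^] ee N c \<in> K" using subgroup_pow_closed[OF K(2) x] .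
  then obtain y where y: "y \<in> F" "x [^] ee N c \<in> C y" using F(3) by blast
  have yK: "y \<in> K" using y F by blast
  have yc: "y \<in> carrier G" using yK Kc by blast
  have "inv y \<otimes> x [^] ee m c \<in> Hy y" if "m \<ge> N" for m
  proof -
    have a: "inv y \<otimes> x [^] ee N c \<in> Hy y" using y unfolding C_def by blast
    have b: "inv (x [^] ee (Ny y) c) \<otimes> x [^] ee N c \<in> Hy y" using Ny[OF yK] NN[OF y(1)] c by blast
    have d: "inv (x [^] ee (Ny y) c) \<otimes> x [^] ee m c \<in> Hy y" using Ny[OF yK] NN[OF y(1)] c that by auto
    have "((inv y \<otimes> x [^] ee N c) \<otimes> inv (inv (x [^] ee (Ny y) c) \<otimes> x [^] ee N c)) \<otimes> (inv (x [^] ee (Ny y) c) \<otimes> x [^] ee m c) \<in> Hy y"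
      using a b d Hy[OF yK] by (meson subgroup.m_closed subgroup.m_inv_closed)
    then show ?thesis using id2 yc xc by simp
  qed
  then show False using Hy[OF yK] by auto
qed

lemma limf_spec:
  assumes c: "c \<in> QZ_dual_carrier"
  shows "limf G T x c \<in> carrier G \<and> P c (limf G T x c)"
proof -
  obtain y where y: "y \<in> K" "P c y" using P_exists[OF c] by blast
  have yc: "y \<in> carrier G" using y K(2) subgroup.subset by blast
  have "limf G T x c = y" unfolding limf_def
    by (rule the_equality) (use y yc P_unique in blast)+
  then show ?thesis using y yc by simp
qed

lemma limf_eq:
  assumes c: "c \<in> QZ_dual_carrier" and y: "y \<in> carrier G" "P c y"
  shows "limf G T x c = y"
  using P_unique[OF _ y(1) _ y(2)] limf_spec[OF c] by blast

lemma near: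
  assumes H: "subgroup H G" "openin T H"
    and N: "\<forall>n\<ge>N. \<forall>m\<ge>n. \<forall>c\<in>QZ_dual_carrier. inv (x [^] ee n c) \<otimes> x [^] ee m c \<in> H"
    and c: "c \<in> QZ_dual_carrier"
  shows "inv (limf G T x c) \<otimes> x [^] ee N c \<in> H"
proof -
  let ?y = "limf G T x c"
  obtain N' where N': "\<forall>n\<ge>N'. inv ?y \<otimes> x [^] ee n c \<in> H" using limf_spec[OF c] H by blast
  let ?m = "max N N'"
  have a: "inv ?y \<otimes> x [^] ee ?m c \<in> H" using N' by simp
  have b: "inv (x [^] ee N c) \<otimes> x [^] ee ?m c \<in> H" using N c by simp
  have "(inv ?y \<otimes> x [^] ee ?m c) \<otimes> inv (inv (x [^] ee N c) \<otimes> x [^] ee ?m c) \<in> H"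
    using a b H(1) by (meson subgroup.m_closed subgroup.m_inv_closed)
  then show ?thesis using id1 limf_spec[OF c] xc by simp
qed


lemma limf_hom:
  assumes c: "c \<in> QZ_dual_carrier" and d: "d \<in> QZ_dual_carrier"
  shows "limf G T x (\<lambda>a. c a * d a) = limf G T x c \<otimes> limf G T x d"
proof (rule limf_eq[OF QZ_mult_closed[OF c d]])
  let ?yc = "limf G T x c" and ?yd = "limf G T x d"
  have yc: "?yc \<in> carrier G" "P c ?yc" and yd: "?yd \<in> carrier G" "P d ?yd"
    using limf_spec c d by blast+
  show "?yc \<otimes> ?yd \<in> carrier G" using yc yd by simp
  show "P (\<lambda>a. c a * d a) (?yc \<otimes> ?yd)"
  proof (intro allI impI)
    fix H assume H: "subgroup H G \<and> openin T H"
    obtain N0 where N0: "\<forall>n\<ge>N0. \<forall>q::nat. x [^] (fact n * q) \<in> H" using stab H by blast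
    obtain N1 where N1: "\<forall>n\<ge>N1. inv ?yc \<otimes> x [^] ee n c \<in> H" using yc H by blast
    obtain N2 where N2: "\<forall>n\<ge>N2. inv ?yd \<otimes> x [^] ee n d \<in> H" using yd H by blast
    have "inv (?yc \<otimes> ?yd) \<otimes> x [^] ee n (\<lambda>a. c a * d a) \<in> H" if n: "n \<ge> max N0 (max N1 N2)" for n
    proof -
      define q where "q = (ee n c + ee n d) div fact n"
      have e: "ee n c + ee n d = ee n (\<lambda>a. c a * d a) + fact n * q"
        unfolding q_def ee_mult[OF c d] by simp
      have AB: "x [^] ee n c \<otimes> x [^] ee n d = x [^] ee n (\<lambda>a. c a * d a) \<otimes> x [^] (fact n * q)"
        using xc by (simp add: nat_pow_mult e)
      have "((inv ?yc \<otimes> x [^] ee n c) \<otimes> (inv ?yd \<otimes> x [^] ee n d)) \<otimes> inv (x [^] (fact n * q)) \<in> H"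
        using N0 N1 N2 n H by (meson max.boundedE subgroup.m_closed subgroup.m_inv_closed)
      then show ?thesis using id3[OF yc(1) yd(1) _ _ _ _ AB] xc by simp
    qed
    then show "\<exists>N. \<forall>n\<ge>N. inv (?yc \<otimes> ?yd) \<otimes> x [^] ee n (\<lambda>a. c a * d a) \<in> H" by blast
  qed
qed

lemma limf_cont: "continuous_map QZ_dual_topology T (limf G T x)"
  unfolding continuous_map_def topspace_QZ
proof (intro conjI allI impI)
  show "limf G T x \<in> QZ_dual_carrier \<rightarrow> topspace T" using limf_spec ts by auto
  fix U assume U: "openin T U"
  show "openin QZ_dual_topology {c \<in> QZ_dual_carrier. limf G T x c \<in> U}"
  proof (subst openin_subopen, intro ballI)
    fix c assume cU: "c \<in> {c \<in> QZ_dual_carrier. limf G T x c \<in> U}"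
    then have c: "c \<in> QZ_dual_carrier" and yU: "limf G T x c \<in> U" by auto
    let ?y = "limf G T x c"
    have y: "?y \<in> carrier G" using limf_spec[OF c] by blast
    let ?U0 = "{z \<in> carrier G. ?y \<otimes> z \<in> U}"
    have "openin T ?U0" using trans_open[OF y U] .
    moreover have "\<one> \<in> ?U0" using y yU by simp
    ultimately obtain H where H: "subgroup H G" "openin T H" "H \<subseteq> ?U0"
      using open_subgroup by blast
    obtain N where N: "\<forall>n\<ge>N. \<forall>m\<ge>n. \<forall>c\<in>QZ_dual_carrier. inv (x [^] ee n c) \<otimes> x [^] ee m c \<in> H"
      using stab[OF H(1,2)] by blast
    let ?S = "{d \<in> QZ_dual_carrier. d (1 / of_nat (fact N)) = c (1 / of_nat (fact N))}"
    have "openin QZ_dual_topology ?S" by (rule open_level_set[OF c])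
    moreover have "c \<in> ?S" using c by simp
    moreover have "?S \<subseteq> {c \<in> QZ_dual_carrier. limf G T x c \<in> U}"
    proof
      fix d assume dS: "d \<in> ?S"
      then have d: "d \<in> QZ_dual_carrier" by simp
      have eq: "ee N d = ee N c" using dS unfolding ee_def by simp
      let ?yd = "limf G T x d"
      have yd: "?yd \<in> carrier G" using limf_spec[OF d] by blast
      have a: "inv ?y \<otimes> x [^] ee N c \<in> H" by (rule near[OF H(1,2) N c])
      have b: "inv ?yd \<otimes> x [^] ee N c \<in> H" using near[OF H(1,2) N d] eq by simp
      have "(inv ?y \<otimes> x [^] ee N c) \<otimes> inv (inv ?yd \<otimes> x [^] ee N c) \<in> H"
        using a b H(1) by (meson subgroup.m_closed subgroup.m_inv_closed)
      then have "inv ?y \<otimes> ?yd \<in> ?U0" using id1 y yd xc H(3) by auto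
      then have "?y \<otimes> (inv ?y \<otimes> ?yd) \<in> U" by simp
      then show "d \<in> {c \<in> QZ_dual_carrier. limf G T x c \<in> U}" using d y yd c1 by simp
    qed
    ultimately show "\<exists>S. openin QZ_dual_topology S \<and> c \<in> S \<and> S \<subseteq> {c \<in> QZ_dual_carrier. limf G T x c \<in> U}"
      by blast
  qed
qed

lemma limf_chi0: "limf G T x chi0 = x"
proof (rule limf_eq[OF chi0_carrier xc], intro allI impI)
  fix H assume H: "subgroup H G \<and> openin T H"
  have "inv x \<otimes> x [^] ee n chi0 \<in> H" if "n \<ge> 2" for n
  proof -
    have "fact 2 \<le> (fact n :: nat)" using that by (rule fact_mono)
    then have "1 < (fact n :: nat)" by simp
    then have "ee n chi0 = 1" using ee_chi0 by simp
    then show ?thesis using xc H subgroup.one_closed by auto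
  qed
  then show "\<exists>N. \<forall>n\<ge>N. inv x \<otimes> x [^] ee n chi0 \<in> H" by blast
qed

end

end


theorem lemma12:
  fixes G :: "('a, 'b) monoid_scheme" and T :: "'a topology"
  assumes "LCA_group G T"
    and "T \<noteq> discrete_topology (carrier G)"
    and "totally_disconnected_space T"
    and "torsion_free G"
  shows "\<exists>f. f \<in> hom QZ_dual G \<and> continuous_map QZ_dual_topology T f \<and>
             (\<exists>c \<in> carrier QZ_dual. f c \<noteq> \<one>\<^bsub>G\<^esub>)"
proof -
  have A: "comm_group G" "topspace T = carrier G"
    "continuous_map (prod_topology T T) T (\<lambda>(x, y). x \<otimes>\<^bsub>G\<^esub> y)"
    "continuous_map T T (\<lambda>x. inv\<^bsub>G\<^esub> x)" "Hausdorff_space T" "locally_compact_space T"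
    using assms(1) unfolding LCA_group_def topological_group_def by auto
  interpret tdlca G T
    by (rule tdlca.intro[OF A(1)], unfold_locales) (use A assms(2,3) in auto)
  have "openin T (carrier G)" using openin_topspace[of T] ts by simp
  then obtain K where K: "subgroup K G" "openin T K" "compactin T K"
    using open_subgroup[of "carrier G"] by blast
  have "\<exists>x\<in>K. x \<noteq> \<one>\<^bsub>G\<^esub>"
  proof (rule ccontr)
    assume "\<not> (\<exists>x\<in>K. x \<noteq> \<one>\<^bsub>G\<^esub>)"
    then have "K = {\<one>\<^bsub>G\<^esub>}" using subgroup.one_closed[OF K(1)] by blast
    then show False using one_not_open K(2) by simp
  qed
  then obtain x where x: "x \<in> K" "x \<noteq> \<one>\<^bsub>G\<^esub>" by blast
  let ?f = "limf G T x"
  have "?f \<in> hom QZ_dual G"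
    unfolding hom_def QZ_dual_def
    using limf_spec[OF K(3) K(1) x(1)] limf_hom[OF K(3) K(1) x(1)] by auto
  moreover have "continuous_map QZ_dual_topology T ?f" by (rule limf_cont[OF K(3) K(1) x(1)])
  moreover have "chi0 \<in> carrier QZ_dual" "?f chi0 \<noteq> \<one>\<^bsub>G\<^esub>"
    using chi0_carrier limf_chi0[OF K(3) K(1) x(1)] x(2) by (auto simp: QZ_dual_def)
  ultimately show ?thesis by blast
qed

end
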